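(* Let $G$ be a countable infinite discrete group, $X$ an infinite compact Hausdorff space and $\alpha: G\curvearrowright X$ a continuous action such that there is no $G$-invariant regular Borel probability measure on $X$. Consider: (i) $\alpha$ has dynamical comparison; (ii) $\alpha$ has paradoxical comparison; (iii) $\alpha$ has weak paradoxical comparison. Then (i)$\Rightarrow$(ii)$\Rightarrow$(iii). If moreover $\alpha$ is minimal, then (i), (ii), (iii) are equivalent.
   Context: Subequivalence: for closed $F\subset X$ and open $O\subset X$, $F\prec O$ if there exist a finite collection $\mathcal{U}$ of open sets covering $F$ and $s_U\in G$ with the sets $s_UU$, $U\in\mathcal{U}$, pairwise disjoint subsets of $O$; for open $V$, $V\prec O$ means $F\prec O$ for every closed $F\subset V$. Dynamical comparison: $V\prec O$ for every open $V$ and nonempty open $O$ with $\mu(V)<\mu(O)$ for all $G$-invariant regular Borel probability measures $\mu$ (when there are no such measures, this means $V\prec O$ for all open $V$ and nonempty open $O$). Paradoxical comparison: for every nonempty open $O$ and closed $F\subset O$ there are disjoint nonempty open $O_1,O_2\subset O$ with $F\prec O_1$ and $F\prec O_2$. Weak paradoxical comparison: for every closed $F$ and nonempty open $O$ with $F\subset G\cdot O=\bigcup_{g\in G}gO$, one has $F\prec O$. *)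

theory Defs
  imports "HOL-Probability.Probability_Measure" "HOL-Algebra.Group_Action"
begin

definition borel_of :: "'x topology \<Rightarrow> 'x measure" where
  "borel_of X = sigma (topspace X) {U. openin X U}"

definition cont_action :: "('g, 'b) monoid_scheme \<Rightarrow> 'x topology \<Rightarrow> ('g \<Rightarrow> 'x \<Rightarrow> 'x) \<Rightarrow> bool" where
  "cont_action G X \<phi> \<longleftrightarrow> group_action G (topspace X) \<phi> \<and>
     (\<forall>g\<in>carrier G. continuous_map X X (\<phi> g))"

definition inv_regular_borel_prob :: "('g, 'b) monoid_scheme \<Rightarrow> 'x topology \<Rightarrow> ('g \<Rightarrow> 'x \<Rightarrow> 'x) \<Rightarrow> 'x measure \<Rightarrow> bool" where
  "inv_regular_borel_prob G X \<phi> M \<longleftrightarrow>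
     sets M = sets (borel_of X) \<and> space M = topspace X \<and> prob_space M \<and>
     (\<forall>A\<in>sets M. emeasure M A = (SUP K\<in>{K. compactin X K \<and> K \<subseteq> A}. emeasure M K)
                  \<and> emeasure M A = (INF U\<in>{U. openin X U \<and> A \<subseteq> U}. emeasure M U)) \<and>
     (\<forall>g\<in>carrier G. \<forall>A\<in>sets M. emeasure M (\<phi> g -` A \<inter> topspace X) = emeasure M A)"

definition subequiv :: "('g, 'b) monoid_scheme \<Rightarrow> 'x topology \<Rightarrow> ('g \<Rightarrow> 'x \<Rightarrow> 'x) \<Rightarrow> 'x set \<Rightarrow> 'x set \<Rightarrow> bool" where
  "subequiv G X \<phi> F W \<longleftrightarrow>
     (\<exists>Us s. finite Us \<and> (\<forall>U\<in>Us. openin X U) \<and> F \<subseteq> \<Union>Us \<and>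
        (\<forall>U\<in>Us. s U \<in> carrier G \<and> \<phi> (s U) ` U \<subseteq> W) \<and>
        (\<forall>U\<in>Us. \<forall>U'\<in>Us. U \<noteq> U' \<longrightarrow> \<phi> (s U) ` U \<inter> \<phi> (s U') ` U' = {}))"

definition open_subequiv :: "('g, 'b) monoid_scheme \<Rightarrow> 'x topology \<Rightarrow> ('g \<Rightarrow> 'x \<Rightarrow> 'x) \<Rightarrow> 'x set \<Rightarrow> 'x set \<Rightarrow> bool" where
  "open_subequiv G X \<phi> V W \<longleftrightarrow> (\<forall>F. closedin X F \<and> F \<subseteq> V \<longrightarrow> subequiv G X \<phi> F W)"

definition dynamical_comparison :: "('g, 'b) monoid_scheme \<Rightarrow> 'x topology \<Rightarrow> ('g \<Rightarrow> 'x \<Rightarrow> 'x) \<Rightarrow> bool" where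
  "dynamical_comparison G X \<phi> \<longleftrightarrow>
     (\<forall>V W. openin X V \<and> openin X W \<and> W \<noteq> {} \<and>
        (\<forall>M. inv_regular_borel_prob G X \<phi> M \<longrightarrow> measure M V < measure M W)
        \<longrightarrow> open_subequiv G X \<phi> V W)"

definition paradoxical_comparison :: "('g, 'b) monoid_scheme \<Rightarrow> 'x topology \<Rightarrow> ('g \<Rightarrow> 'x \<Rightarrow> 'x) \<Rightarrow> bool" where
  "paradoxical_comparison G X \<phi> \<longleftrightarrow>
     (\<forall>W F. openin X W \<and> W \<noteq> {} \<and> closedin X F \<and> F \<subseteq> W \<longrightarrow>
        (\<exists>W1 W2. openin X W1 \<and> openin X W2 \<and> W1 \<noteq> {} \<and> W2 \<noteq> {} \<and>
           W1 \<subseteq> W \<and> W2 \<subseteq> W \<and> W1 \<inter> W2 = {} \<and>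
           subequiv G X \<phi> F W1 \<and> subequiv G X \<phi> F W2))"

definition weak_paradoxical_comparison :: "('g, 'b) monoid_scheme \<Rightarrow> 'x topology \<Rightarrow> ('g \<Rightarrow> 'x \<Rightarrow> 'x) \<Rightarrow> bool" where
  "weak_paradoxical_comparison G X \<phi> \<longleftrightarrow>
     (\<forall>F W. closedin X F \<and> openin X W \<and> W \<noteq> {} \<and>
        F \<subseteq> (\<Union>g\<in>carrier G. \<phi> g ` W) \<longrightarrow> subequiv G X \<phi> F W)"

definition minimal_action :: "('g, 'b) monoid_scheme \<Rightarrow> 'x topology \<Rightarrow> ('g \<Rightarrow> 'x \<Rightarrow> 'x) \<Rightarrow> bool" where
  "minimal_action G X \<phi> \<longleftrightarrow>
     (\<forall>x\<in>topspace X. X closure_of (orbit G \<phi> x) = topspace X)"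

end

theory Submission
  imports Defs "HOL-Analysis.Abstract_Topological_Spaces" "HOL-Analysis.Locally"
begin

lemma subequiv_idx:
  assumes "finite I" "\<And>i. i\<in>I \<Longrightarrow> openin X (P i)" "F \<subseteq> (\<Union>i\<in>I. P i)"
    "\<And>i. i\<in>I \<Longrightarrow> a i \<in> carrier G" "\<And>i. i\<in>I \<Longrightarrow> \<phi> (a i) ` P i \<subseteq> W"
    "\<And>i j. i\<in>I \<Longrightarrow> j\<in>I \<Longrightarrow> i \<noteq> j \<Longrightarrow> \<phi> (a i) ` P i \<inter> \<phi> (a j) ` P j = {}"
  shows "subequiv G X \<phi> F W"
proof -
  define c where "c U = (SOME i. i \<in> I \<and> P i = U)" for U
  have c: "c U \<in> I \<and> P (c U) = U" if UU: "U \<in> P ` I" for U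
  proof -
    obtain i where "i \<in> I" "P i = U" using UU by blast
    then show ?thesis unfolding c_def using someI[of "\<lambda>j. j\<in>I \<and> P j = U" i] by blast
  qed
  show ?thesis unfolding subequiv_def
  proof (intro exI conjI ballI impI)
    show "finite (P ` I)" using assms(1) by simp
    show "openin X U" if "U \<in> P ` I" for U using that assms(2) by blast
    show "F \<subseteq> \<Union> (P ` I)" using assms(3) by simp
    show "a (c U) \<in> carrier G" if "U \<in> P ` I" for U using c[OF that] assms(4) by blast
    show "\<phi> (a (c U)) ` U \<subseteq> W" if "U \<in> P ` I" for U
    proof -
      have "\<phi> (a (c U)) ` P (c U) \<subseteq> W" using c[OF that] assms(5) by blast
      then show ?thesis using c[OF that] by simp
    qed
    show "\<phi> (a (c U)) ` U \<inter> \<phi> (a (c U')) ` U' = {}" if "U \<in> P ` I" "U' \<in> P ` I" "U \<noteq> U'" for U U'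
    proof -
      have "c U \<noteq> c U'" using c[OF that(1)] c[OF that(2)] that(3) by metis
      then have "\<phi> (a (c U)) ` P (c U) \<inter> \<phi> (a (c U')) ` P (c U') = {}"
        using assms(6) c[OF that(1)] c[OF that(2)] by blast
      then show ?thesis using c[OF that(1)] c[OF that(2)] by simp
    qed
  qed
qed

lemma subequivE:
  assumes "subequiv G X \<phi> F W"
  obtains Us s where "finite Us" "\<forall>U\<in>Us. openin X U" "F \<subseteq> \<Union>Us"
    "\<forall>U\<in>Us. s U \<in> carrier G \<and> \<phi> (s U) ` U \<subseteq> W"
    "\<forall>U\<in>Us. \<forall>U'\<in>Us. U \<noteq> U' \<longrightarrow> \<phi> (s U) ` U \<inter> \<phi> (s U') ` U' = {}"
  using assms unfolding subequiv_def by (elim exE conjE) (rule that)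

lemma sub_empty: "subequiv G X \<phi> {} W"
  unfolding subequiv_def by (rule exI[of _ "{}"]) auto

lemma sub_mono:
  assumes "subequiv G X \<phi> F W" "F' \<subseteq> F" "W \<subseteq> W'"
  shows "subequiv G X \<phi> F' W'"
proof -
  obtain Us s where U: "finite Us" "\<forall>U\<in>Us. openin X U" "F \<subseteq> \<Union>Us"
    "\<forall>U\<in>Us. s U \<in> carrier G \<and> \<phi> (s U) ` U \<subseteq> W"
    "\<forall>U\<in>Us. \<forall>U'\<in>Us. U \<noteq> U' \<longrightarrow> \<phi> (s U) ` U \<inter> \<phi> (s U') ` U' = {}"
    using assms(1) by (rule subequivE)
  have "F' \<subseteq> \<Union>Us" using U(3) assms(2) by blast
  moreover have "\<forall>U\<in>Us. s U \<in> carrier G \<and> \<phi> (s U) ` U \<subseteq> W'" using U(4) assms(3) by blast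
  ultimately show ?thesis unfolding subequiv_def using U(1,2,5) by blast
qed

lemma sub_union:
  assumes "subequiv G X \<phi> F1 W1" "subequiv G X \<phi> F2 W2" "W1 \<inter> W2 = {}"
  shows "subequiv G X \<phi> (F1 \<union> F2) (W1 \<union> W2)"
proof -
  obtain Us s where U: "finite Us" "\<forall>U\<in>Us. openin X U" "F1 \<subseteq> \<Union>Us"
    "\<forall>U\<in>Us. s U \<in> carrier G \<and> \<phi> (s U) ` U \<subseteq> W1"
    "\<forall>U\<in>Us. \<forall>U'\<in>Us. U \<noteq> U' \<longrightarrow> \<phi> (s U) ` U \<inter> \<phi> (s U') ` U' = {}"
    using assms(1) by (rule subequivE)
  obtain Vs t where V: "finite Vs" "\<forall>U\<in>Vs. openin X U" "F2 \<subseteq> \<Union>Vs"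
    "\<forall>U\<in>Vs. t U \<in> carrier G \<and> \<phi> (t U) ` U \<subseteq> W2"
    "\<forall>U\<in>Vs. \<forall>U'\<in>Vs. U \<noteq> U' \<longrightarrow> \<phi> (t U) ` U \<inter> \<phi> (t U') ` U' = {}"
    using assms(2) by (rule subequivE)
  show ?thesis
  proof (rule subequiv_idx[where I="Us <+> Vs" and P="case_sum id id" and a="case_sum s t"])
    show "finite (Us <+> Vs)" using U(1) V(1) by simp
    show "openin X (case_sum id id i)" if "i \<in> Us <+> Vs" for i using that U(2) V(2) by auto
    show "F1 \<union> F2 \<subseteq> (\<Union>i\<in>Us <+> Vs. case_sum id id i)"
    proof
      fix x assume "x \<in> F1 \<union> F2"
      then show "x \<in> (\<Union>i\<in>Us <+> Vs. case_sum id id i)"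
      proof
        assume "x \<in> F1" then obtain U where "U \<in> Us" "x \<in> U" using U(3) by blast
        then show ?thesis by (intro UN_I[of "Inl U"]) auto
      next
        assume "x \<in> F2" then obtain U where "U \<in> Vs" "x \<in> U" using V(3) by blast
        then show ?thesis by (intro UN_I[of "Inr U"]) auto
      qed
    qed
    show "case_sum s t i \<in> carrier G" if "i \<in> Us <+> Vs" for i using that U(4) V(4) by auto
    show "\<phi> (case_sum s t i) ` case_sum id id i \<subseteq> W1 \<union> W2" if "i \<in> Us <+> Vs" for i
    proof (cases i)
      case (Inl U)
      then have "\<phi> (s U) ` U \<subseteq> W1" using that U(4) by auto
      then show ?thesis using Inl by auto
    next
      case (Inr U)
      then have "\<phi> (t U) ` U \<subseteq> W2" using that V(4) by auto
      then show ?thesis using Inr by auto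
    qed
    show "\<phi> (case_sum s t i) ` case_sum id id i \<inter> \<phi> (case_sum s t j) ` case_sum id id j = {}"
      if "i \<in> Us <+> Vs" "j \<in> Us <+> Vs" "i \<noteq> j" for i j
    proof -
      have A: "\<phi> (s U) ` U \<inter> \<phi> (t V) ` V = {}" if "U \<in> Us" "V \<in> Vs" for U V
        using U(4) V(4) that assms(3) by blast
      show ?thesis
      proof (cases i)
        case i: (Inl U)
        show ?thesis
        proof (cases j)
          case j: (Inl U')
          then have "U \<noteq> U'" "U \<in> Us" "U' \<in> Us" using that i by auto
          then have "\<phi> (s U) ` U \<inter> \<phi> (s U') ` U' = {}" using U(5) by blast
          then show ?thesis using i j by simp
        next
          case j: (Inr V)
          then have "U \<in> Us" "V \<in> Vs" using that i by auto
          then have "\<phi> (s U) ` U \<inter> \<phi> (t V) ` V = {}" using A by blast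
          then show ?thesis using i j by simp
        qed
      next
        case i: (Inr V)
        show ?thesis
        proof (cases j)
          case j: (Inl U)
          then have "U \<in> Us" "V \<in> Vs" using that i by auto
          then have "\<phi> (s U) ` U \<inter> \<phi> (t V) ` V = {}" using A by blast
          then show ?thesis using i j by (simp add: Int_commute)
        next
          case j: (Inr V')
          then have "V \<noteq> V'" "V \<in> Vs" "V' \<in> Vs" using that i by auto
          then have "\<phi> (t V) ` V \<inter> \<phi> (t V') ` V' = {}" using V(5) by blast
          then show ?thesis using i j by simp
        qed
      qed
    qed
  qed
qed

locale cact =
  fixes G :: "('g, 'b) monoid_scheme" and X :: "'x topology" and \<phi> :: "'g \<Rightarrow> 'x \<Rightarrow> 'x"
  assumes ga: "group_action G (topspace X) \<phi>"
    and cont: "\<And>g. g \<in> carrier G \<Longrightarrow> continuous_map X X (\<phi> g)"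
    and cpt: "compact_space X" and hs: "Hausdorff_space X"
begin

lemma grp: "group G"
  using ga unfolding group_action_def group_hom_def by blast

lemma act_in: "g \<in> carrier G \<Longrightarrow> x \<in> topspace X \<Longrightarrow> \<phi> g x \<in> topspace X"
  using group_action.element_image[OF ga] by blast

lemma act_one: "x \<in> topspace X \<Longrightarrow> \<phi> \<one>\<^bsub>G\<^esub> x = x"
  using group_action.id_eq_one[OF ga] by (metis restrict_apply)

lemma inv_l: "g \<in> carrier G \<Longrightarrow> x \<in> topspace X \<Longrightarrow> \<phi> (inv\<^bsub>G\<^esub> g) (\<phi> g x) = x"
  using group_action.composition_rule[OF ga, of x "inv\<^bsub>G\<^esub> g" g] act_one
  by (simp add: group.l_inv[OF grp] group.inv_closed[OF grp])

lemma inv_r: "g \<in> carrier G \<Longrightarrow> x \<in> topspace X \<Longrightarrow> \<phi> g (\<phi> (inv\<^bsub>G\<^esub> g) x) = x"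
  using group_action.composition_rule[OF ga, of x g "inv\<^bsub>G\<^esub> g"] act_one
  by (simp add: group.r_inv[OF grp] group.inv_closed[OF grp])

lemma inj: "g \<in> carrier G \<Longrightarrow> inj_on (\<phi> g) (topspace X)"
  using group_action.inj_prop[OF ga] by blast

lemma img_eq: "g \<in> carrier G \<Longrightarrow> U \<subseteq> topspace X \<Longrightarrow>
   \<phi> g ` U = {x \<in> topspace X. \<phi> (inv\<^bsub>G\<^esub> g) x \<in> U}"
proof (intro equalityI subsetI)
  fix x assume g: "g \<in> carrier G" and U: "U \<subseteq> topspace X" and "x \<in> \<phi> g ` U"
  then obtain u where "u \<in> U" "x = \<phi> g u" by blast
  then show "x \<in> {x \<in> topspace X. \<phi> (inv\<^bsub>G\<^esub> g) x \<in> U}" using g U inv_l act_in by auto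
next
  fix x assume g: "g \<in> carrier G" and U: "U \<subseteq> topspace X" and "x \<in> {x \<in> topspace X. \<phi> (inv\<^bsub>G\<^esub> g) x \<in> U}"
  then show "x \<in> \<phi> g ` U" using inv_r[OF g, of x] by (metis (mono_tags, lifting) image_eqI mem_Collect_eq)
qed

lemma img_open: "g \<in> carrier G \<Longrightarrow> openin X U \<Longrightarrow> openin X (\<phi> g ` U)"
  using img_eq[of g U] openin_subset[of X U] openin_continuous_map_preimage[OF cont[of "inv\<^bsub>G\<^esub> g"], of U]
    group.inv_closed[OF grp] by simp

lemma img_closed: "g \<in> carrier G \<Longrightarrow> closedin X C \<Longrightarrow> closedin X (\<phi> g ` C)"
  by (meson closedin_compact_space compactin_imp_closedin cont cpt hs image_compactin)

lemma nb: "openin X W \<Longrightarrow> x \<in> W \<Longrightarrow> \<exists>U V. openin X U \<and> closedin X V \<and> x \<in> U \<and> U \<subseteq> V \<and> V \<subseteq> W"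
  using compact_Hausdorff_imp_regular_space[OF cpt hs] neighbourhood_base_of_closedin neighbourhood_base_of
  by metis

lemma shrink:
  assumes "closedin X F" "\<And>i. i\<in>I \<Longrightarrow> openin X (P i)" "F \<subseteq> (\<Union>i\<in>I. P i)"
  shows "\<exists>C. (\<forall>i\<in>I. closedin X (C i) \<and> C i \<subseteq> P i) \<and> F \<subseteq> (\<Union>i\<in>I. C i)"
proof -
  have "\<forall>x\<in>F. \<exists>i U V. i \<in> I \<and> openin X U \<and> closedin X V \<and> x \<in> U \<and> U \<subseteq> V \<and> V \<subseteq> P i"
  proof
    fix x assume "x \<in> F"
    then obtain i where "i \<in> I" "x \<in> P i" using assms(3) by blast
    then show "\<exists>i U V. i \<in> I \<and> openin X U \<and> closedin X V \<and> x \<in> U \<and> U \<subseteq> V \<and> V \<subseteq> P i"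
      using nb[of "P i" x] assms(2) by blast
  qed
  then obtain ii N V where H: "\<forall>x\<in>F. ii x \<in> I \<and> openin X (N x) \<and> closedin X (V x) \<and> x \<in> N x \<and> N x \<subseteq> V x \<and> V x \<subseteq> P (ii x)"
    by metis
  have "compactin X F" using closedin_compact_space cpt assms(1) by blast
  moreover have "\<forall>U\<in>N ` F. openin X U" "F \<subseteq> \<Union>(N ` F)" using H by auto
  ultimately obtain FF where FF: "finite FF" "FF \<subseteq> N ` F" "F \<subseteq> \<Union>FF"
    unfolding compactin_def by meson
  then obtain T where T: "T \<subseteq> F" "finite T" "FF = N ` T" using finite_subset_image by metis
  define C where "C i = (\<Union>x\<in>{x\<in>T. ii x = i}. V x)" for i
  show ?thesis
  proof (intro exI conjI ballI)
    fix i assume "i \<in> I"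
    show "closedin X (C i)" unfolding C_def
      by (rule closedin_Union) (use T H in auto)
    show "C i \<subseteq> P i" unfolding C_def using T H by blast
  next
    show "F \<subseteq> (\<Union>i\<in>I. C i)"
    proof
      fix x assume "x \<in> F"
      then obtain y where y: "y \<in> T" "x \<in> N y" using FF T by blast
      then have "x \<in> C (ii y)" unfolding C_def using T H by blast
      moreover have "ii y \<in> I" using T H y by blast
      ultimately show "x \<in> (\<Union>i\<in>I. C i)" by blast
    qed
  qed
qed

lemma sub_single:
  assumes "g \<in> carrier G" "openin X W" "F \<subseteq> \<phi> g ` W"
  shows "subequiv G X \<phi> F W"
  unfolding subequiv_def
proof (intro exI conjI ballI impI)
  show "finite {\<phi> g ` W}" by simp
  show "openin X U" if "U \<in> {\<phi> g ` W}" for U using that img_open assms by blast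
  show "F \<subseteq> \<Union>{\<phi> g ` W}" using assms by simp
  show "inv\<^bsub>G\<^esub> g \<in> carrier G" using group.inv_closed[OF grp] assms by blast
  show "\<phi> (inv\<^bsub>G\<^esub> g) ` U \<subseteq> W" if "U \<in> {\<phi> g ` W}" for U
    using that inv_l[OF assms(1)] openin_subset[OF assms(2)] by auto
  show "\<phi> (inv\<^bsub>G\<^esub> g) ` U \<inter> \<phi> (inv\<^bsub>G\<^esub> g) ` U' = {}" if "U \<in> {\<phi> g ` W}" "U' \<in> {\<phi> g ` W}" "U \<noteq> U'" for U U'
    using that by simp
qed

lemma sub_trans:
  assumes "closedin X F" "subequiv G X \<phi> F W"
  shows "\<exists>K. closedin X K \<and> K \<subseteq> W \<and> (\<forall>W'. subequiv G X \<phi> K W' \<longrightarrow> subequiv G X \<phi> F W')"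
proof -
  obtain Us s where U: "finite Us" "\<forall>U\<in>Us. openin X U" "F \<subseteq> \<Union>Us"
    "\<forall>U\<in>Us. s U \<in> carrier G \<and> \<phi> (s U) ` U \<subseteq> W"
    "\<forall>U\<in>Us. \<forall>U'\<in>Us. U \<noteq> U' \<longrightarrow> \<phi> (s U) ` U \<inter> \<phi> (s U') ` U' = {}"
    using assms(2) by (rule subequivE)
  obtain C where C: "\<forall>U\<in>Us. closedin X (C U) \<and> C U \<subseteq> U" and Ccov: "F \<subseteq> (\<Union>U\<in>Us. C U)"
  proof -
    have "\<exists>C. (\<forall>U\<in>Us. closedin X (C U) \<and> C U \<subseteq> U) \<and> F \<subseteq> (\<Union>U\<in>Us. C U)"
      by (rule shrink[OF assms(1)]) (use U(2,3) in auto)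
    then show ?thesis using that by blast
  qed
  define K where "K = (\<Union>U\<in>Us. \<phi> (s U) ` C U)"
  have Kc: "closedin X K" unfolding K_def
  proof (rule closedin_Union)
    show "finite ((\<lambda>U. \<phi> (s U) ` C U) ` Us)" using U(1) by simp
    fix T assume "T \<in> (\<lambda>U. \<phi> (s U) ` C U) ` Us"
    then obtain U where "U \<in> Us" "T = \<phi> (s U) ` C U" by blast
    then show "closedin X T" using img_closed U(4) C by blast
  qed
  have KW: "K \<subseteq> W" unfolding K_def using C U(4) by blast
  show ?thesis
  proof (intro exI[of _ K] conjI allI impI)
    fix W' assume "subequiv G X \<phi> K W'"
    then obtain Vs t where V: "finite Vs" "\<forall>U\<in>Vs. openin X U" "K \<subseteq> \<Union>Vs"
      "\<forall>U\<in>Vs. t U \<in> carrier G \<and> \<phi> (t U) ` U \<subseteq> W'"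
      "\<forall>U\<in>Vs. \<forall>U'\<in>Vs. U \<noteq> U' \<longrightarrow> \<phi> (t U) ` U \<inter> \<phi> (t U') ` U' = {}"
      by (rule subequivE) blast
    have Utop: "U \<subseteq> topspace X" if "U \<in> Us" for U using U(2) that openin_subset by blast
    have sG: "s U \<in> carrier G" if "U \<in> Us" for U using U(4) that by blast
    have tG: "t V \<in> carrier G" if "V \<in> Vs" for V using V(4) that by blast
    have comp: "\<phi> (t V \<otimes>\<^bsub>G\<^esub> s U) x = \<phi> (t V) (\<phi> (s U) x)" if "U \<in> Us" "V \<in> Vs" "x \<in> U" for U V x
    proof -
      have "x \<in> topspace X" using Utop that by blast
      then show ?thesis using group_action.composition_rule[OF ga _ tG[OF that(2)] sG[OF that(1)]] by blast
    qed
    define P where "P = (\<lambda>(U::'x set,V::'x set). {x\<in>U. \<phi> (s U) x \<in> V})"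
    define a where "a = (\<lambda>(U::'x set,V::'x set). t V \<otimes>\<^bsub>G\<^esub> s U)"
    have Pi: "P (U,V) = {x\<in>U. \<phi> (s U) x \<in> V}" for U V unfolding P_def by simp
    have ai: "a (U,V) = t V \<otimes>\<^bsub>G\<^esub> s U" for U V unfolding a_def by simp
    have img: "\<phi> (a (U,V)) ` P (U,V) = \<phi> (t V) ` (\<phi> (s U) ` U \<inter> V)" if "U \<in> Us" "V \<in> Vs" for U V
    proof
      show "\<phi> (a (U,V)) ` P (U,V) \<subseteq> \<phi> (t V) ` (\<phi> (s U) ` U \<inter> V)"
      proof
        fix y assume "y \<in> \<phi> (a (U,V)) ` P (U,V)"
        then obtain x where x: "x \<in> U" "\<phi> (s U) x \<in> V" "y = \<phi> (a (U,V)) x" unfolding Pi by blast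
        then have "y = \<phi> (t V) (\<phi> (s U) x)" using comp[OF that x(1)] unfolding ai by simp
        then show "y \<in> \<phi> (t V) ` (\<phi> (s U) ` U \<inter> V)" using x by blast
      qed
      show "\<phi> (t V) ` (\<phi> (s U) ` U \<inter> V) \<subseteq> \<phi> (a (U,V)) ` P (U,V)"
      proof
        fix y assume "y \<in> \<phi> (t V) ` (\<phi> (s U) ` U \<inter> V)"
        then obtain x where x: "x \<in> U" "\<phi> (s U) x \<in> V" "y = \<phi> (t V) (\<phi> (s U) x)" by blast
        then have "y = \<phi> (a (U,V)) x" using comp[OF that x(1)] unfolding ai by simp
        moreover have "x \<in> P (U,V)" using x unfolding Pi by blast
        ultimately show "y \<in> \<phi> (a (U,V)) ` P (U,V)" by blast
      qed
    qed
    show "subequiv G X \<phi> F W'"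
    proof (rule subequiv_idx[where I="Us \<times> Vs" and P=P and a=a])
      show "finite (Us \<times> Vs)" using U(1) V(1) by simp
      show "openin X (P i)" if "i \<in> Us \<times> Vs" for i
      proof -
        obtain U V where i: "i = (U,V)" by force
        have m: "U \<in> Us" "V \<in> Vs" using that i by auto
        have "openin X {x\<in>U. \<phi> (s U) x \<in> V}"
          using openin_continuous_map_preimage_gen[OF cont[OF sG[OF m(1)]]] U(2) V(2) m by blast
        then show ?thesis unfolding i Pi .
      qed
      show "F \<subseteq> (\<Union>i\<in>Us \<times> Vs. P i)"
      proof
        fix x assume "x \<in> F"
        then obtain U where Ux: "U \<in> Us" "x \<in> C U" using Ccov by blast
        then have "\<phi> (s U) x \<in> K" unfolding K_def by blast
        then obtain V where V1: "V \<in> Vs" "\<phi> (s U) x \<in> V" using V(3) by blast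
        have "x \<in> U" using Ux C by blast
        then have "x \<in> P (U,V)" unfolding Pi using V1 by blast
        then show "x \<in> (\<Union>i\<in>Us \<times> Vs. P i)" using Ux(1) V1(1) by blast
      qed
      show "a i \<in> carrier G" if "i \<in> Us \<times> Vs" for i
      proof -
        obtain U V where i: "i = (U,V)" by force
        have m: "U \<in> Us" "V \<in> Vs" using that i by auto
        show ?thesis unfolding i ai
          using monoid.m_closed[OF group.is_monoid[OF grp] tG[OF m(2)] sG[OF m(1)]] .
      qed
      show "\<phi> (a i) ` P i \<subseteq> W'" if "i \<in> Us \<times> Vs" for i
      proof -
        obtain U V where i: "i = (U,V)" by force
        have m: "U \<in> Us" "V \<in> Vs" using that i by auto
        have "\<phi> (t V) ` (\<phi> (s U) ` U \<inter> V) \<subseteq> \<phi> (t V) ` V" by blast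
        also have "\<dots> \<subseteq> W'" using V(4) m(2) by blast
        finally show ?thesis unfolding i img[OF m] .
      qed
      show "\<phi> (a i) ` P i \<inter> \<phi> (a j) ` P j = {}"
        if "i \<in> Us \<times> Vs" "j \<in> Us \<times> Vs" "i \<noteq> j" for i j
      proof -
        obtain U V where i: "i = (U,V)" by force
        obtain U' V' where j: "j = (U',V')" by force
        have m: "U \<in> Us" "V \<in> Vs" "U' \<in> Us" "V' \<in> Vs" using that i j by auto
        show ?thesis unfolding i j img[OF m(1,2)] img[OF m(3,4)]
        proof (rule ccontr)
          assume "\<phi> (t V) ` (\<phi> (s U) ` U \<inter> V) \<inter> \<phi> (t V') ` (\<phi> (s U') ` U' \<inter> V') \<noteq> {}"
          then obtain z z' where z: "z \<in> \<phi> (s U) ` U" "z \<in> V" "z' \<in> \<phi> (s U') ` U'" "z' \<in> V'"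
            and eq: "\<phi> (t V) z = \<phi> (t V') z'" by blast
          show False
          proof (cases "V = V'")
            case False
            have "\<phi> (t V) ` V \<inter> \<phi> (t V') ` V' = {}" using V(5) m(2,4) False by blast
            then show False using z(2,4) eq by blast
          next
            case True
            then have "U \<noteq> U'" using that i j by auto
            have "z \<in> topspace X" "z' \<in> topspace X" using z(2,4) V(2) m(2,4) openin_subset by blast+
            then have "z = z'" using inj_onD[OF inj[OF tG[OF m(2)]]] eq True by blast
            moreover have "\<phi> (s U) ` U \<inter> \<phi> (s U') ` U' = {}" using U(5) m(1,3) \<open>U \<noteq> U'\<close> by blast
            ultimately show False using z(1,3) by blast
          qed
        qed
      qed
    qed
  qed (use Kc KW in blast)+
qed

lemma ii_iii_aux:
  assumes pc: "paradoxical_comparison G X \<phi>"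
  shows "finite S \<Longrightarrow> S \<subseteq> carrier G \<Longrightarrow> openin X W \<Longrightarrow> W \<noteq> {} \<Longrightarrow> closedin X F \<Longrightarrow>
     F \<subseteq> (\<Union>g\<in>S. \<phi> g ` W) \<Longrightarrow> subequiv G X \<phi> F W"
proof (induction S arbitrary: F rule: finite_induct)
  case empty
  then show ?case using sub_empty[of G X \<phi> W] by simp
next
  case (insert g S)
  obtain C where C: "\<forall>h\<in>insert g S. closedin X (C h) \<and> C h \<subseteq> \<phi> h ` W"
    and Cc: "F \<subseteq> (\<Union>h\<in>insert g S. C h)"
  proof -
    have op: "\<And>h. h \<in> insert g S \<Longrightarrow> openin X (\<phi> h ` W)" using img_open insert.prems by auto
    show ?thesis using shrink[OF insert.prems(4) op insert.prems(5)] that by blast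
  qed
  define F1 where "F1 = F \<inter> C g"
  define F2 where "F2 = F \<inter> (\<Union>h\<in>S. C h)"
  have F12: "F \<subseteq> F1 \<union> F2" using Cc unfolding F1_def F2_def by blast
  have c1: "closedin X F1" unfolding F1_def using C insert.prems by auto
  have c2: "closedin X F2" unfolding F2_def
    by (intro closedin_Int insert.prems closedin_Union) (use C insert.hyps in auto)
  have s2: "subequiv G X \<phi> F2 W"
  proof (rule insert.IH)
    show "F2 \<subseteq> (\<Union>h\<in>S. \<phi> h ` W)" unfolding F2_def using C by blast
  qed (use insert.prems c2 in auto)
  have s1: "subequiv G X \<phi> F1 W"
    by (rule sub_single[of g]) (use insert.prems C in \<open>auto simp: F1_def\<close>)
  obtain K1 where K1: "closedin X K1" "K1 \<subseteq> W" "\<And>W'. subequiv G X \<phi> K1 W' \<Longrightarrow> subequiv G X \<phi> F1 W'"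
    using sub_trans[OF c1 s1] by blast
  obtain K2 where K2: "closedin X K2" "K2 \<subseteq> W" "\<And>W'. subequiv G X \<phi> K2 W' \<Longrightarrow> subequiv G X \<phi> F2 W'"
    using sub_trans[OF c2 s2] by blast
  obtain W1 W2 where W: "W1 \<subseteq> W" "W2 \<subseteq> W" "W1 \<inter> W2 = {}"
    "subequiv G X \<phi> (K1 \<union> K2) W1" "subequiv G X \<phi> (K1 \<union> K2) W2"
  proof -
    have D: "closedin X (K1 \<union> K2)" using K1(1) K2(1) by (rule closedin_Un)
    have D2: "K1 \<union> K2 \<subseteq> W" using K1(2) K2(2) by (rule Un_least)
    have "\<exists>W1 W2. openin X W1 \<and> openin X W2 \<and> W1 \<noteq> {} \<and> W2 \<noteq> {} \<and>
           W1 \<subseteq> W \<and> W2 \<subseteq> W \<and> W1 \<inter> W2 = {} \<and>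
           subequiv G X \<phi> (K1 \<union> K2) W1 \<and> subequiv G X \<phi> (K1 \<union> K2) W2"
    proof (rule pc[unfolded paradoxical_comparison_def, rule_format])
      show "openin X W \<and> W \<noteq> {} \<and> closedin X (K1 \<union> K2) \<and> K1 \<union> K2 \<subseteq> W"
        using D D2 insert.prems(2,3) by blast
    qed
    then show ?thesis using that by blast
  qed
  have "subequiv G X \<phi> K1 W1" by (rule sub_mono[OF W(4)]) auto
  then have S1: "subequiv G X \<phi> F1 W1" by (rule K1(3))
  have "subequiv G X \<phi> K2 W2" by (rule sub_mono[OF W(5)]) auto
  then have S2: "subequiv G X \<phi> F2 W2" by (rule K2(3))
  have U12: "subequiv G X \<phi> (F1 \<union> F2) (W1 \<union> W2)" using S1 S2 W(3) by (rule sub_union)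
  have "W1 \<union> W2 \<subseteq> W" using W(1,2) by (rule Un_least)
  then show ?case by (rule sub_mono[OF U12 F12])
qed

lemma ii_iii:
  assumes pc: "paradoxical_comparison G X \<phi>"
  shows "weak_paradoxical_comparison G X \<phi>"
  unfolding weak_paradoxical_comparison_def
proof (intro allI impI)
  fix F W assume H: "closedin X F \<and> openin X W \<and> W \<noteq> {} \<and> F \<subseteq> (\<Union>g\<in>carrier G. \<phi> g ` W)"
  have "compactin X F" using closedin_compact_space cpt H by blast
  moreover have "\<forall>U\<in>(\<lambda>g. \<phi> g ` W) ` carrier G. openin X U" using img_open H by auto
  ultimately obtain FF where FF: "finite FF" "FF \<subseteq> (\<lambda>g. \<phi> g ` W) ` carrier G" "F \<subseteq> \<Union>FF"
    unfolding compactin_def using H by meson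
  then obtain S where S: "S \<subseteq> carrier G" "finite S" "FF = (\<lambda>g. \<phi> g ` W) ` S"
    using finite_subset_image by metis
  show "subequiv G X \<phi> F W"
    by (rule ii_iii_aux[OF pc S(2,1)]) (use H FF S in auto)
qed

lemma dc_all:
  assumes "dynamical_comparison G X \<phi>" "\<nexists>M. inv_regular_borel_prob G X \<phi> M"
    "closedin X F" "openin X W" "W \<noteq> {}"
  shows "subequiv G X \<phi> F W"
  using assms closedin_subset[OF assms(3)]
  unfolding dynamical_comparison_def open_subequiv_def by blast

lemma i_ii:
  assumes inf: "infinite (topspace X)" and nm: "\<nexists>M. inv_regular_borel_prob G X \<phi> M"
    and dc: "dynamical_comparison G X \<phi>"
  shows "paradoxical_comparison G X \<phi>"
  unfolding paradoxical_comparison_def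
proof (intro allI impI)
  fix W F assume H: "openin X W \<and> W \<noteq> {} \<and> closedin X F \<and> F \<subseteq> W"
  have two: "\<exists>a b. a \<in> W \<and> b \<in> W \<and> a \<noteq> b"
  proof (rule ccontr)
    assume nt: "\<not> ?thesis"
    obtain w where "w \<in> W" using H by blast
    have "x = w" if "x \<in> W" for x using nt that \<open>w \<in> W\<close> by blast
    then have Ww: "W = {w}" using \<open>w \<in> W\<close> by blast
    have Wo: "openin X W" "W \<noteq> {}" using H by blast+
    have "subequiv G X \<phi> (topspace X) W" by (rule dc_all[OF dc nm closedin_topspace Wo])
    then obtain Us s where U: "finite Us" "\<forall>U\<in>Us. openin X U" "topspace X \<subseteq> \<Union>Us"
      "\<forall>U\<in>Us. s U \<in> carrier G \<and> \<phi> (s U) ` U \<subseteq> W"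
      by (rule subequivE) blast
    have "\<exists>U\<in>Us. infinite U"
    proof (rule ccontr)
      assume nn: "\<not> (\<exists>U\<in>Us. infinite U)"
      have "finite (\<Union>Us)" by (rule finite_Union[OF U(1)]) (use nn in blast)
      then have "finite (topspace X)" by (rule finite_subset[OF U(3)])
      then show False using inf by simp
    qed
    then obtain U where "U \<in> Us" "infinite U" by blast
    then have "U \<noteq> {}" by auto
    then obtain a where a: "a \<in> U" by blast
    have "infinite (U - {a})" using \<open>infinite U\<close> by simp
    then have "U - {a} \<noteq> {}" by (metis finite.emptyI)
    then obtain b where b: "b \<in> U - {a}" by blast
    have top: "a \<in> topspace X" "b \<in> topspace X" using a b U(2) \<open>U \<in> Us\<close> openin_subset by blast+
    have "\<phi> (s U) ` U \<subseteq> {w}" using U(4) \<open>U \<in> Us\<close> Ww by blast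
    then have e: "\<phi> (s U) a = w" "\<phi> (s U) b = w" using a b by blast+
    have "s U \<in> carrier G" using U(4) \<open>U \<in> Us\<close> by blast
    then have ij: "inj_on (\<phi> (s U)) (topspace X)" by (rule inj)
    have "a = b" using inj_onD[OF ij, of a b] top e by simp
    then show False using b by blast
  qed
  then obtain a b where ab: "a \<in> W" "b \<in> W" "a \<noteq> b" by blast
  have "a \<in> topspace X" "b \<in> topspace X" using ab H openin_subset by blast+
  then obtain A B where AB: "openin X A" "openin X B" "a \<in> A" "b \<in> B" "disjnt A B"
  proof -
    have "\<forall>x y. x \<in> topspace X \<and> y \<in> topspace X \<and> x \<noteq> y
              \<longrightarrow> (\<exists>U V. openin X U \<and> openin X V \<and> x \<in> U \<and> y \<in> V \<and> disjnt U V)"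
      using hs unfolding Hausdorff_space_def by simp
    then have "\<exists>U V. openin X U \<and> openin X V \<and> a \<in> U \<and> b \<in> V \<and> disjnt U V"
      using \<open>a \<in> topspace X\<close> \<open>b \<in> topspace X\<close> ab(3) by blast
    then show ?thesis using that by blast
  qed
  show "\<exists>W1 W2. openin X W1 \<and> openin X W2 \<and> W1 \<noteq> {} \<and> W2 \<noteq> {} \<and> W1 \<subseteq> W \<and> W2 \<subseteq> W \<and>
          W1 \<inter> W2 = {} \<and> subequiv G X \<phi> F W1 \<and> subequiv G X \<phi> F W2"
  proof (intro exI conjI)
    show o1: "openin X (W \<inter> A)" "openin X (W \<inter> B)" using openin_Int[of X W A] openin_Int[of X W B] H AB(1,2) by blast+
    show n1: "W \<inter> A \<noteq> {}" "W \<inter> B \<noteq> {}" using ab AB(3,4) by blast+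
    show "W \<inter> A \<subseteq> W" "W \<inter> B \<subseteq> W" by auto
    show "W \<inter> A \<inter> (W \<inter> B) = {}" using AB(5) by (auto simp: disjnt_def)
    have Fc: "closedin X F" using H by blast
    show "subequiv G X \<phi> F (W \<inter> A)" by (rule dc_all[OF dc nm Fc o1(1) n1(1)])
    show "subequiv G X \<phi> F (W \<inter> B)" by (rule dc_all[OF dc nm Fc o1(2) n1(2)])
  qed
qed

lemma min_cover:
  assumes "minimal_action G X \<phi>" "openin X W" "W \<noteq> {}" "x \<in> topspace X"
  shows "\<exists>g\<in>carrier G. x \<in> \<phi> g ` W"
proof -
  obtain w where w: "w \<in> W" using assms by blast
  have Wt: "W \<subseteq> topspace X" using assms(2) by (rule openin_subset)
  have "X closure_of (orbit G \<phi> x) = topspace X"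
    using assms(1,4) unfolding minimal_action_def by blast
  then have "w \<in> X closure_of (orbit G \<phi> x)" using Wt w by blast
  then have "\<forall>T. w \<in> T \<and> openin X T \<longrightarrow> (\<exists>y. y \<in> orbit G \<phi> x \<and> y \<in> T)"
    by (simp add: in_closure_of)
  then obtain y where "y \<in> orbit G \<phi> x" "y \<in> W" using assms(2) w by blast
  then obtain g where g: "g \<in> carrier G" "y = \<phi> g x" unfolding orbit_def by blast
  then have xe: "x = \<phi> (inv\<^bsub>G\<^esub> g) y" using inv_l assms(4) by simp
  have ig: "inv\<^bsub>G\<^esub> g \<in> carrier G" using group.inv_closed[OF grp] g(1) by blast
  have "x \<in> \<phi> (inv\<^bsub>G\<^esub> g) ` W" using xe \<open>y \<in> W\<close> by (rule image_eqI)
  then show ?thesis using ig by (rule bexI)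
qed

lemma iii_i:
  assumes "minimal_action G X \<phi>" "weak_paradoxical_comparison G X \<phi>"
  shows "dynamical_comparison G X \<phi>"
  unfolding dynamical_comparison_def open_subequiv_def
proof (intro allI impI)
  fix V W F assume H: "openin X V \<and> openin X W \<and> W \<noteq> {} \<and>
        (\<forall>M. inv_regular_borel_prob G X \<phi> M \<longrightarrow> measure M V < measure M W)"
    and F: "closedin X F \<and> F \<subseteq> V"
  have Wo: "openin X W" "W \<noteq> {}" using H by blast+
  have Fc: "closedin X F" using F by blast
  have "F \<subseteq> (\<Union>g\<in>carrier G. \<phi> g ` W)"
  proof
    fix x assume "x \<in> F"
    then have "x \<in> topspace X" using closedin_subset[OF Fc] by blast
    then have "\<exists>g\<in>carrier G. x \<in> \<phi> g ` W" by (rule min_cover[OF assms(1) Wo])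
    then show "x \<in> (\<Union>g\<in>carrier G. \<phi> g ` W)" by blast
  qed
  then have "closedin X F \<and> openin X W \<and> W \<noteq> {} \<and> F \<subseteq> (\<Union>g\<in>carrier G. \<phi> g ` W)"
    using Fc Wo by blast
  then show "subequiv G X \<phi> F W"
    by (rule assms(2)[unfolded weak_paradoxical_comparison_def, rule_format])
qed

end

theorem proposition4p6:
  fixes G :: "('g, 'b) monoid_scheme" and X :: "'x topology" and \<phi> :: "'g \<Rightarrow> 'x \<Rightarrow> 'x"
  assumes "group G" and "countable (carrier G)" and "infinite (carrier G)"
    and "compact_space X" and "Hausdorff_space X" and "infinite (topspace X)"
    and "cont_action G X \<phi>"
    and "\<nexists>M. inv_regular_borel_prob G X \<phi> M"
  shows "(dynamical_comparison G X \<phi> \<longrightarrow> paradoxical_comparison G X \<phi>) \<and>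
         (paradoxical_comparison G X \<phi> \<longrightarrow> weak_paradoxical_comparison G X \<phi>) \<and>
         (minimal_action G X \<phi> \<longrightarrow>
            (dynamical_comparison G X \<phi> \<longleftrightarrow> paradoxical_comparison G X \<phi>) \<and>
            (paradoxical_comparison G X \<phi> \<longleftrightarrow> weak_paradoxical_comparison G X \<phi>))"
proof -
  interpret cact G X \<phi>
    using cact.intro[of G X \<phi>] assms(4,5,7) unfolding cont_action_def by blast
  show ?thesis
    using i_ii[OF assms(6,8)] ii_iii iii_i by blast
qed

end
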